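(* Let $k\ge 3$, $F$ a field, $\Phi\le F^*$ a subgroup of order $k$ with generator $\varphi$, and suppose $(F,\Phi)$ is circular. Then the group $\mathcal{G}_1$ maps $\mathcal{O}_\varphi(F,k)$ into itself (so acts on it). If moreover $k$ is even, then $\mathcal{G}_0$ acts on $\mathcal{O}_\varphi(F,k)$.
   Context: $\mathbf{k}=\{1,\dots,k-1\}$, $\mathbf{k}_0=\{0,\dots,k-1\}$. $(F,\Phi)$ is circular if $|(\Phi a+b)\cap\Phi c|\le2$ for all $a,b,c\in F^*$, with $\Phi a+b=\{\lambda a+b:\lambda\in\Phi\}$. A quadruple $(i,j\mid s,t)\in\mathbf{k}^4$ with $i\ne s$ is an overlap (w.r.t. $\varphi$) if $\varphi^\omega(\varphi^j-1)(\varphi^s-1)=(\varphi^i-1)(\varphi^t-1)$ for some $\omega\in\mathbf{k}_0$; it is trivial if one of $i\equiv\pm j$, $j\equiv\pm t$, $t\equiv\pm s$, $s\equiv\pm i\pmod k$ holds, nontrivial otherwise; $\mathcal{O}_\varphi(F,k)$ is the set of nontrivial overlaps. Groups acting on $\mathbf{k}^4$ (quadruples written $(i,j\mid s,t)$): for $m=1,2,3,4$, $\kappa_m$ replaces the $m$-th entry $u$ by $k-u$. Let $D_4$ be the group of coordinate permutations generated by the transpositions $(i,t)$, $(j,s)$ and the double transposition $(i,j)(s,t)$ (a dihedral group of order 8, consisting of the identity and $(i,t),(j,s),(i,t)(j,s),(i,s)(j,t),(i,j)(s,t),(i,j,t,s),(i,s,t,j)$). $\mathcal{G}_0$ is the group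 generated by $\kappa_1,\dots,\kappa_4$ and $D_4$; $\mathcal{G}_1$ is the group generated by $\kappa_1\kappa_4,\kappa_2\kappa_4,\kappa_3\kappa_4$ and $D_4$. *)

theory Defs
  imports Main
begin

definition circular :: "'a::field set \<Rightarrow> bool" where
  "circular Phi \<longleftrightarrow>
     (\<forall>a b c. a \<noteq> 0 \<longrightarrow> b \<noteq> 0 \<longrightarrow> c \<noteq> 0 \<longrightarrow>
        card ((\<lambda>l. l * a + b) ` Phi \<inter> (\<lambda>l. l * c) ` Phi) \<le> 2)"

type_synonym quad = "nat \<times> nat \<times> nat \<times> nat"

text \<open>Quadruples (i,j|s,t) are written (i,j,s,t).\<close>
definition is_overlap :: "'a::field \<Rightarrow> nat \<Rightarrow> quad \<Rightarrow> bool" where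
  "is_overlap phi k q = (case q of (i,j,s,t) \<Rightarrow>
     i \<in> {1..<k} \<and> j \<in> {1..<k} \<and> s \<in> {1..<k} \<and> t \<in> {1..<k} \<and> i \<noteq> s \<and>
     (\<exists>w\<in>{0..<k}. phi ^ w * (phi ^ j - 1) * (phi ^ s - 1) = (phi ^ i - 1) * (phi ^ t - 1)))"

definition pmcong :: "nat \<Rightarrow> nat \<Rightarrow> nat \<Rightarrow> bool" where
  "pmcong k u v \<longleftrightarrow> u mod k = v mod k \<or> (u + v) mod k = 0"

definition trivial_quad :: "nat \<Rightarrow> quad \<Rightarrow> bool" where
  "trivial_quad k q = (case q of (i,j,s,t) \<Rightarrow>
     pmcong k i j \<or> pmcong k j t \<or> pmcong k t s \<or> pmcong k s i)"

definition overlaps :: "'a::field \<Rightarrow> nat \<Rightarrow> quad set" where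
  "overlaps phi k = {q. is_overlap phi k q \<and> \<not> trivial_quad k q}"

definition kappa1 :: "nat \<Rightarrow> quad \<Rightarrow> quad" where
  "kappa1 k q = (case q of (i,j,s,t) \<Rightarrow> (k - i, j, s, t))"
definition kappa2 :: "nat \<Rightarrow> quad \<Rightarrow> quad" where
  "kappa2 k q = (case q of (i,j,s,t) \<Rightarrow> (i, k - j, s, t))"
definition kappa3 :: "nat \<Rightarrow> quad \<Rightarrow> quad" where
  "kappa3 k q = (case q of (i,j,s,t) \<Rightarrow> (i, j, k - s, t))"
definition kappa4 :: "nat \<Rightarrow> quad \<Rightarrow> quad" where
  "kappa4 k q = (case q of (i,j,s,t) \<Rightarrow> (i, j, s, k - t))"

text \<open>Generators of D4: transpositions (i,t), (j,s) and (i,j)(s,t).\<close>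
definition swap_it :: "quad \<Rightarrow> quad" where
  "swap_it q = (case q of (i,j,s,t) \<Rightarrow> (t, j, s, i))"
definition swap_js :: "quad \<Rightarrow> quad" where
  "swap_js q = (case q of (i,j,s,t) \<Rightarrow> (i, s, j, t))"
definition swap_ij_st :: "quad \<Rightarrow> quad" where
  "swap_ij_st q = (case q of (i,j,s,t) \<Rightarrow> (j, i, t, s))"

text \<open>Group generated by a set of maps (all generators used are involutions,
  so the generated monoid is the generated group).\<close>
inductive_set generated :: "('b \<Rightarrow> 'b) set \<Rightarrow> ('b \<Rightarrow> 'b) set" for gens where
  gen_id: "id \<in> generated gens"
| gen_step: "g \<in> generated gens \<Longrightarrow> h \<in> gens \<Longrightarrow> h \<circ> g \<in> generated gens"

definition G0 :: "nat \<Rightarrow> (quad \<Rightarrow> quad) set" where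
  "G0 k = generated {kappa1 k, kappa2 k, kappa3 k, kappa4 k, swap_it, swap_js, swap_ij_st}"

definition G1 :: "nat \<Rightarrow> (quad \<Rightarrow> quad) set" where
  "G1 k = generated {kappa1 k \<circ> kappa4 k, kappa2 k \<circ> kappa4 k, kappa3 k \<circ> kappa4 k,
                     swap_it, swap_js, swap_ij_st}"

end

theory Submission
  imports Defs
begin

lemma pmcong_iff:
  assumes "0 < u" "u < k" "0 < v" "v < k"
  shows "pmcong k u v \<longleftrightarrow> u = v \<or> u + v = k"
proof -
  have "(u + v) mod k = 0 \<longleftrightarrow> u + v = k"
  proof
    assume "(u + v) mod k = 0"
    then obtain c where c: "u + v = k * c" by auto
    have "c \<ge> 1" using c assms by (cases c) auto
    moreover have "c < 2" using c assms by (cases c; cases "c - 1") auto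
    ultimately show "u + v = k" using c by (cases c; cases "c - 1") auto
  qed auto
  thus ?thesis using assms by (simp add: pmcong_def)
qed

lemma gen_pres:
  assumes "g \<in> generated gens" "\<And>h. h \<in> gens \<Longrightarrow> h ` S \<subseteq> S"
  shows "g ` S \<subseteq> S"
  using assms(1)
proof induction
  case gen_id then show ?case by simp
next
  case (gen_step g h)
  then show ?case using assms(2)[of h] by (auto simp: image_comp[symmetric])
qed

lemma order_facts:
  fixes phi :: "'a::field"
  assumes "Phi = range (\<lambda>n. phi ^ n)" "0 \<notin> Phi" "card Phi = k" "k \<ge> 3"
  shows "phi ^ k = 1" "\<And>n. 0 < n \<Longrightarrow> n < k \<Longrightarrow> phi ^ n \<noteq> 1"
proof -
  have fin: "finite Phi" using assms by (intro card_ge_0_finite) auto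
  have nz: "phi \<noteq> 0" using assms(1,2) by (metis power_one_right rangeI)
  have "\<not> inj (\<lambda>n::nat. phi ^ n)"
  proof
    assume "inj (\<lambda>n::nat. phi ^ n)"
    then have "infinite (range (\<lambda>n::nat. phi ^ n))"
      using finite_imageD infinite_UNIV_nat by blast
    then show False using fin assms(1) by simp
  qed
  then obtain a b :: nat where ab: "a < b" "phi ^ a = phi ^ b"
    unfolding inj_def by (metis linorder_neqE_nat)
  have "phi ^ a * phi ^ (b - a) = phi ^ (a + (b - a))" by (simp only: power_add)
  also have "\<dots> = phi ^ a * 1" using ab by simp
  finally have "phi ^ a * phi ^ (b - a) = phi ^ a * 1" .
  then have ex: "phi ^ (b - a) = 1" using nz by simp
  define d where "d = (LEAST n. 0 < n \<and> phi ^ n = 1)"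
  have d: "0 < d \<and> phi ^ d = 1" unfolding d_def
    by (rule LeastI[of _ "b - a"]) (use ab ex in auto)
  have dmin: "\<And>n. 0 < n \<Longrightarrow> n < d \<Longrightarrow> phi ^ n \<noteq> 1"
    unfolding d_def using not_less_Least by blast
  have pm: "phi ^ n = phi ^ (n mod d)" for n
  proof -
    have "phi ^ n = phi ^ (d * (n div d) + n mod d)" by simp
    also have "\<dots> = (phi ^ d) ^ (n div d) * phi ^ (n mod d)"
      by (simp only: power_add power_mult)
    finally show ?thesis using d by simp
  qed
  have R: "Phi = (\<lambda>n. phi ^ n) ` {..<d}"
  proof
    show "Phi \<subseteq> (\<lambda>n. phi ^ n) ` {..<d}"
      using assms(1) pm d by (auto intro!: image_eqI[of _ _ "_ mod d"])
  qed (use assms(1) in auto)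
  have inj: "inj_on (\<lambda>n. phi ^ n) {..<d}"
  proof (rule inj_onI)
    fix x y assume xy: "x \<in> {..<d}" "y \<in> {..<d}" "phi ^ x = phi ^ y"
    show "x = y"
    proof (rule ccontr)
      assume "x \<noteq> y"
      then consider "x < y" | "y < x" by linarith
      then show False
      proof cases
        case 1
        have "phi ^ x * phi ^ (y - x) = phi ^ (x + (y - x))" by (simp only: power_add)
        also have "\<dots> = phi ^ x * 1" using 1 xy by simp
        finally have "phi ^ x * phi ^ (y - x) = phi ^ x * 1" .
        then have "phi ^ (y - x) = 1" using nz by simp
        moreover have "y - x < d" "0 < y - x" using 1 xy(2) by auto
        ultimately show False using dmin[of "y - x"] by blast
      next
        case 2
        have "phi ^ y * phi ^ (x - y) = phi ^ (y + (x - y))" by (simp only: power_add)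
        also have "\<dots> = phi ^ y * 1" using 2 xy by simp
        finally have "phi ^ y * phi ^ (x - y) = phi ^ y * 1" .
        then have "phi ^ (x - y) = 1" using nz by simp
        moreover have "x - y < d" "0 < x - y" using 2 xy(1) by auto
        ultimately show False using dmin[of "x - y"] by blast
      qed
    qed
  qed
  have "card Phi = d" using R inj by (simp add: card_image)
  then have "d = k" using assms by simp
  then show "phi ^ k = 1" "\<And>n. 0 < n \<Longrightarrow> n < k \<Longrightarrow> phi ^ n \<noteq> 1"
    using d dmin by auto
qed

lemma neg_pow:
  fixes phi :: "'a::field"
  assumes "phi ^ k = 1" "u \<le> k"
  shows "phi ^ (k - u) - 1 = - (phi ^ (k - u) * (phi ^ u - 1))"
proof -
  have "phi ^ (k - u) * phi ^ u = 1" using assms by (simp add: power_add[symmetric])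
  then show ?thesis by (simp add: algebra_simps)
qed

lemma w_ex:
  fixes phi :: "'a::field"
  assumes "phi ^ k = 1" "0 < k" "phi ^ N * A = B"
  shows "\<exists>w\<in>{0..<k}. phi ^ w * A = B"
proof -
  have "phi ^ N = phi ^ (k * (N div k) + N mod k)" by simp
  also have "\<dots> = (phi ^ k) ^ (N div k) * phi ^ (N mod k)"
    by (simp only: power_add power_mult)
  finally have "phi ^ N = phi ^ (N mod k)" using assms by simp
  then show ?thesis using assms by (intro bexI[of _ "N mod k"]) auto
qed


lemma pow_mod:
  fixes phi :: "'a::field"
  assumes "phi ^ k = 1"
  shows "phi ^ N = phi ^ (N mod k)"
proof -
  have "phi ^ N = phi ^ (k * (N div k) + N mod k)" by simp
  also have "\<dots> = (phi ^ k) ^ (N div k) * phi ^ (N mod k)"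
    by (simp only: power_add power_mult)
  finally show ?thesis using assms by simp
qed

definition pm :: "nat \<Rightarrow> nat \<Rightarrow> nat \<Rightarrow> bool" where
  "pm k u v \<longleftrightarrow> u = v \<or> u + v = k"

lemma pm_symD: "pm k u v \<Longrightarrow> pm k v u"
  unfolding pm_def by auto
lemma pm_neg1: "u \<le> k \<Longrightarrow> pm k (k - u) v = pm k u v"
  unfolding pm_def by auto
lemma pm_neg2: "v \<le> k \<Longrightarrow> pm k u (k - v) = pm k u v"
  unfolding pm_def by auto

definition triv :: "nat \<Rightarrow> nat \<Rightarrow> nat \<Rightarrow> nat \<Rightarrow> nat \<Rightarrow> bool" where
  "triv k i j s t \<longleftrightarrow> pm k i j \<or> pm k j t \<or> pm k t s \<or> pm k s i"

lemma ov_char: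
  fixes phi :: "'a::field"
  assumes hk: "phi ^ k = 1" and k0: "0 < k"
  shows "(i,j,s,t) \<in> overlaps phi k \<longleftrightarrow>
    (0 < i \<and> i < k \<and> 0 < j \<and> j < k \<and> 0 < s \<and> s < k \<and> 0 < t \<and> t < k \<and> i \<noteq> s \<and>
     \<not> triv k i j s t \<and>
     (\<exists>N. phi ^ N * ((phi ^ j - 1) * (phi ^ s - 1)) = (phi ^ i - 1) * (phi ^ t - 1)))"
    (is "?L \<longleftrightarrow> ?R")
proof
  assume ?L
  then show ?R
    unfolding overlaps_def is_overlap_def trivial_quad_def triv_def pm_def
    by (auto simp: pmcong_iff mult.assoc)
next
  assume R: ?R
  then obtain N where "phi ^ N * ((phi ^ j - 1) * (phi ^ s - 1)) = (phi ^ i - 1) * (phi ^ t - 1)"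
    by blast
  from w_ex[OF hk k0 this] have "\<exists>w\<in>{0..<k}. phi ^ w * (phi ^ j - 1) * (phi ^ s - 1) = (phi ^ i - 1) * (phi ^ t - 1)"
    by (simp add: mult.assoc)
  with R show ?L
    unfolding overlaps_def is_overlap_def trivial_quad_def triv_def pm_def
    by (auto simp: pmcong_iff)
qed

lemma alg_k14: "(w::'a::field)*(a*b) = c*d \<Longrightarrow> (w*p*q)*(a*b) = (-(p*c))*(-(q*d))"
  by (simp add: algebra_simps)
lemma alg_k24: "(w::'a::field)*(a*b) = c*d \<Longrightarrow> pj*pj' = 1 \<Longrightarrow> (w*pj*pt')*((-(pj'*a))*b) = c*(-(pt'*d))"
proof -
  assume h: "w*(a*b) = c*d" "pj*pj' = 1"
  have "(w*pj*pt')*((-(pj'*a))*b) = -(pt'*(pj*pj')*(w*(a*b)))" by (simp add: algebra_simps)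
  also have "\<dots> = c*(-(pt'*d))" using h by (simp add: algebra_simps)
  finally show ?thesis .
qed
lemma alg_k34: "(w::'a::field)*(a*b) = c*d \<Longrightarrow> ps*ps' = 1 \<Longrightarrow> (w*ps*pt')*(a*(-(ps'*b))) = c*(-(pt'*d))"
proof -
  assume h: "w*(a*b) = c*d" "ps*ps' = 1"
  have "(w*ps*pt')*(a*(-(ps'*b))) = -(pt'*(ps*ps')*(w*(a*b)))" by (simp add: algebra_simps)
  also have "\<dots> = c*(-(pt'*d))" using h by (simp add: algebra_simps)
  finally show ?thesis .
qed
lemma alg_k1: "(w::'a::field)*(a*b) = c*d \<Longrightarrow> m = -1 \<Longrightarrow> (m*p*w)*(a*b) = (-(p*c))*d"
proof -
  assume h: "w*(a*b) = c*d" "m = -1"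
  have "(m*p*w)*(a*b) = -(p*(w*(a*b)))" using h(2) by (simp add: algebra_simps)
  also have "\<dots> = (-(p*c))*d" using h(1) by (simp add: algebra_simps)
  finally show ?thesis .
qed
lemma alg_k4: "(w::'a::field)*(a*b) = c*d \<Longrightarrow> m = -1 \<Longrightarrow> (m*p*w)*(a*b) = c*(-(p*d))"
proof -
  assume h: "w*(a*b) = c*d" "m = -1"
  have "(m*p*w)*(a*b) = -(p*(w*(a*b)))" using h(2) by (simp add: algebra_simps)
  also have "\<dots> = c*(-(p*d))" using h(1) by (simp add: algebra_simps)
  finally show ?thesis .
qed
lemma alg_k2: "(w::'a::field)*(a*b) = c*d \<Longrightarrow> m = -1 \<Longrightarrow> pj*pj' = 1 \<Longrightarrow> (m*pj*w)*((-(pj'*a))*b) = c*d"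
proof -
  assume h: "w*(a*b) = c*d" "m = -1" "pj*pj' = 1"
  have "(m*pj*w)*((-(pj'*a))*b) = (pj*pj')*(w*(a*b))" using h(2) by (simp add: algebra_simps)
  also have "\<dots> = c*d" using h(1,3) by simp
  finally show ?thesis .
qed
lemma alg_k3: "(w::'a::field)*(a*b) = c*d \<Longrightarrow> m = -1 \<Longrightarrow> pj*pj' = 1 \<Longrightarrow> (m*pj*w)*(a*(-(pj'*b))) = c*d"
proof -
  assume h: "w*(a*b) = c*d" "m = -1" "pj*pj' = 1"
  have "(m*pj*w)*(a*(-(pj'*b))) = (pj*pj')*(w*(a*b))" using h(2) by (simp add: algebra_simps)
  also have "\<dots> = c*d" using h(1,3) by simp
  finally show ?thesis .
qed
lemma alg_ijst: "(w::'a::field)*(a*b) = c*d \<Longrightarrow> w'*w = 1 \<Longrightarrow> w'*(c*d) = a*b"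
proof -
  assume h: "w*(a*b) = c*d" "w'*w = 1"
  have "w'*(c*d) = (w'*w)*(a*b)" using h(1) by (simp add: algebra_simps)
  then show ?thesis using h(2) by simp
qed

lemma inv_pow:
  fixes phi :: "'a::field"
  assumes "phi ^ k = 1" "u \<le> k"
  shows "phi ^ u * phi ^ (k - u) = 1"
  using assms by (simp add: power_add[symmetric])



lemma pres_k14:
  fixes phi :: "'a::field"
  assumes hk: "phi ^ k = 1" and k0: "0 < k"
  shows "(kappa1 k \<circ> kappa4 k) ` overlaps phi k \<subseteq> overlaps phi k"
proof (rule subsetI, elim imageE)
  fix x q assume q: "q \<in> overlaps phi k" and x: "x = (kappa1 k \<circ> kappa4 k) q"
  obtain i j s t where qd: "q = (i,j,s,t)" by (cases q) auto
  from q[unfolded qd] have c: "0 < i" "i < k" "0 < j" "j < k" "0 < s" "s < k" "0 < t" "t < k" "i \<noteq> s"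
    "\<not> triv k i j s t" and "\<exists>N. phi ^ N * ((phi ^ j - 1) * (phi ^ s - 1)) = (phi ^ i - 1) * (phi ^ t - 1)"
    unfolding ov_char[OF hk k0] by auto
  then obtain N where E: "phi ^ N * ((phi ^ j - 1) * (phi ^ s - 1)) = (phi ^ i - 1) * (phi ^ t - 1)" by blast
  have ex: "\<exists>N. phi ^ N * ((phi ^ j - 1) * (phi ^ s - 1)) = (phi ^ (k - i) - 1) * (phi ^ (k - t) - 1)"
  proof (rule exI[of _ "N + (k - i) + (k - t)"])
    show "phi ^ (N + (k - i) + (k - t)) * ((phi ^ j - 1) * (phi ^ s - 1)) = (phi ^ (k - i) - 1) * (phi ^ (k - t) - 1)"
      unfolding power_add neg_pow[OF hk less_imp_le[OF c(2)]] neg_pow[OF hk less_imp_le[OF c(8)]] by (rule alg_k14[OF E])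
  qed
  have nt: "\<not> triv k (k - i) j s (k - t)"
  proof
    assume "triv k (k - i) j s (k - t)"
    then have "triv k i j s t" using c(1-8) unfolding triv_def
      by (auto simp: pm_neg1 pm_neg2 dest: pm_symD)
    with c(10) show False by blast
  qed
  have neq: "k - i \<noteq> s" using nt unfolding triv_def pm_def by blast
  have "(k - i, j, s, k - t) \<in> overlaps phi k"
    unfolding ov_char[OF hk k0] using c(1-8) ex nt neq by (intro conjI) auto
  then show "x \<in> overlaps phi k" by (simp add: x qd kappa1_def kappa4_def)
qed

lemma pres_k24:
  fixes phi :: "'a::field"
  assumes hk: "phi ^ k = 1" and k0: "0 < k"
  shows "(kappa2 k \<circ> kappa4 k) ` overlaps phi k \<subseteq> overlaps phi k"
proof (rule subsetI, elim imageE)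
  fix x q assume q: "q \<in> overlaps phi k" and x: "x = (kappa2 k \<circ> kappa4 k) q"
  obtain i j s t where qd: "q = (i,j,s,t)" by (cases q) auto
  from q[unfolded qd] have c: "0 < i" "i < k" "0 < j" "j < k" "0 < s" "s < k" "0 < t" "t < k" "i \<noteq> s"
    "\<not> triv k i j s t" and "\<exists>N. phi ^ N * ((phi ^ j - 1) * (phi ^ s - 1)) = (phi ^ i - 1) * (phi ^ t - 1)"
    unfolding ov_char[OF hk k0] by auto
  then obtain N where E: "phi ^ N * ((phi ^ j - 1) * (phi ^ s - 1)) = (phi ^ i - 1) * (phi ^ t - 1)" by blast
  have ex: "\<exists>N. phi ^ N * ((phi ^ (k - j) - 1) * (phi ^ s - 1)) = (phi ^ i - 1) * (phi ^ (k - t) - 1)"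
  proof (rule exI[of _ "N + j + (k - t)"])
    show "phi ^ (N + j + (k - t)) * ((phi ^ (k - j) - 1) * (phi ^ s - 1)) = (phi ^ i - 1) * (phi ^ (k - t) - 1)"
      unfolding power_add neg_pow[OF hk less_imp_le[OF c(4)]] neg_pow[OF hk less_imp_le[OF c(8)]] by (rule alg_k24[OF E inv_pow[OF hk less_imp_le[OF c(4)]]])
  qed
  have nt: "\<not> triv k i (k - j) s (k - t)"
  proof
    assume "triv k i (k - j) s (k - t)"
    then have "triv k i j s t" using c(1-8) unfolding triv_def
      by (auto simp: pm_neg1 pm_neg2 dest: pm_symD)
    with c(10) show False by blast
  qed
  have neq: "i \<noteq> s" using nt unfolding triv_def pm_def by blast
  have "(i, k - j, s, k - t) \<in> overlaps phi k"
    unfolding ov_char[OF hk k0] using c(1-8) ex nt neq by (intro conjI) auto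
  then show "x \<in> overlaps phi k" by (simp add: x qd kappa2_def kappa4_def)
qed

lemma pres_k34:
  fixes phi :: "'a::field"
  assumes hk: "phi ^ k = 1" and k0: "0 < k"
  shows "(kappa3 k \<circ> kappa4 k) ` overlaps phi k \<subseteq> overlaps phi k"
proof (rule subsetI, elim imageE)
  fix x q assume q: "q \<in> overlaps phi k" and x: "x = (kappa3 k \<circ> kappa4 k) q"
  obtain i j s t where qd: "q = (i,j,s,t)" by (cases q) auto
  from q[unfolded qd] have c: "0 < i" "i < k" "0 < j" "j < k" "0 < s" "s < k" "0 < t" "t < k" "i \<noteq> s"
    "\<not> triv k i j s t" and "\<exists>N. phi ^ N * ((phi ^ j - 1) * (phi ^ s - 1)) = (phi ^ i - 1) * (phi ^ t - 1)"
    unfolding ov_char[OF hk k0] by auto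
  then obtain N where E: "phi ^ N * ((phi ^ j - 1) * (phi ^ s - 1)) = (phi ^ i - 1) * (phi ^ t - 1)" by blast
  have ex: "\<exists>N. phi ^ N * ((phi ^ j - 1) * (phi ^ (k - s) - 1)) = (phi ^ i - 1) * (phi ^ (k - t) - 1)"
  proof (rule exI[of _ "N + s + (k - t)"])
    show "phi ^ (N + s + (k - t)) * ((phi ^ j - 1) * (phi ^ (k - s) - 1)) = (phi ^ i - 1) * (phi ^ (k - t) - 1)"
      unfolding power_add neg_pow[OF hk less_imp_le[OF c(6)]] neg_pow[OF hk less_imp_le[OF c(8)]] by (rule alg_k34[OF E inv_pow[OF hk less_imp_le[OF c(6)]]])
  qed
  have nt: "\<not> triv k i j (k - s) (k - t)"
  proof
    assume "triv k i j (k - s) (k - t)"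
    then have "triv k i j s t" using c(1-8) unfolding triv_def
      by (auto simp: pm_neg1 pm_neg2 dest: pm_symD)
    with c(10) show False by blast
  qed
  have neq: "i \<noteq> k - s" using nt unfolding triv_def pm_def by blast
  have "(i, j, k - s, k - t) \<in> overlaps phi k"
    unfolding ov_char[OF hk k0] using c(1-8) ex nt neq by (intro conjI) auto
  then show "x \<in> overlaps phi k" by (simp add: x qd kappa3_def kappa4_def)
qed

lemma pres_it:
  fixes phi :: "'a::field"
  assumes hk: "phi ^ k = 1" and k0: "0 < k"
  shows "(swap_it) ` overlaps phi k \<subseteq> overlaps phi k"
proof (rule subsetI, elim imageE)
  fix x q assume q: "q \<in> overlaps phi k" and x: "x = (swap_it) q"
  obtain i j s t where qd: "q = (i,j,s,t)" by (cases q) auto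
  from q[unfolded qd] have c: "0 < i" "i < k" "0 < j" "j < k" "0 < s" "s < k" "0 < t" "t < k" "i \<noteq> s"
    "\<not> triv k i j s t" and "\<exists>N. phi ^ N * ((phi ^ j - 1) * (phi ^ s - 1)) = (phi ^ i - 1) * (phi ^ t - 1)"
    unfolding ov_char[OF hk k0] by auto
  then obtain N where E: "phi ^ N * ((phi ^ j - 1) * (phi ^ s - 1)) = (phi ^ i - 1) * (phi ^ t - 1)" by blast
  have ex: "\<exists>N. phi ^ N * ((phi ^ j - 1) * (phi ^ s - 1)) = (phi ^ t - 1) * (phi ^ i - 1)"
  proof (rule exI[of _ "N"])
    show "phi ^ (N) * ((phi ^ j - 1) * (phi ^ s - 1)) = (phi ^ t - 1) * (phi ^ i - 1)"
      using E by (simp add: ac_simps)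
  qed
  have nt: "\<not> triv k t j s i"
  proof
    assume "triv k t j s i"
    then have "triv k i j s t" using c(1-8) unfolding triv_def
      by (auto simp: pm_neg1 pm_neg2 dest: pm_symD)
    with c(10) show False by blast
  qed
  have neq: "t \<noteq> s" using nt unfolding triv_def pm_def by blast
  have "(t, j, s, i) \<in> overlaps phi k"
    unfolding ov_char[OF hk k0] using c(1-8) ex nt neq by (intro conjI) auto
  then show "x \<in> overlaps phi k" by (simp add: x qd swap_it_def)
qed

lemma pres_js:
  fixes phi :: "'a::field"
  assumes hk: "phi ^ k = 1" and k0: "0 < k"
  shows "(swap_js) ` overlaps phi k \<subseteq> overlaps phi k"
proof (rule subsetI, elim imageE)
  fix x q assume q: "q \<in> overlaps phi k" and x: "x = (swap_js) q"
  obtain i j s t where qd: "q = (i,j,s,t)" by (cases q) auto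
  from q[unfolded qd] have c: "0 < i" "i < k" "0 < j" "j < k" "0 < s" "s < k" "0 < t" "t < k" "i \<noteq> s"
    "\<not> triv k i j s t" and "\<exists>N. phi ^ N * ((phi ^ j - 1) * (phi ^ s - 1)) = (phi ^ i - 1) * (phi ^ t - 1)"
    unfolding ov_char[OF hk k0] by auto
  then obtain N where E: "phi ^ N * ((phi ^ j - 1) * (phi ^ s - 1)) = (phi ^ i - 1) * (phi ^ t - 1)" by blast
  have ex: "\<exists>N. phi ^ N * ((phi ^ s - 1) * (phi ^ j - 1)) = (phi ^ i - 1) * (phi ^ t - 1)"
  proof (rule exI[of _ "N"])
    show "phi ^ (N) * ((phi ^ s - 1) * (phi ^ j - 1)) = (phi ^ i - 1) * (phi ^ t - 1)"
      using E by (simp add: ac_simps)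
  qed
  have nt: "\<not> triv k i s j t"
  proof
    assume "triv k i s j t"
    then have "triv k i j s t" using c(1-8) unfolding triv_def
      by (auto simp: pm_neg1 pm_neg2 dest: pm_symD)
    with c(10) show False by blast
  qed
  have neq: "i \<noteq> j" using nt unfolding triv_def pm_def by blast
  have "(i, s, j, t) \<in> overlaps phi k"
    unfolding ov_char[OF hk k0] using c(1-8) ex nt neq by (intro conjI) auto
  then show "x \<in> overlaps phi k" by (simp add: x qd swap_js_def)
qed

lemma pres_ijst:
  fixes phi :: "'a::field"
  assumes hk: "phi ^ k = 1" and k0: "0 < k"
  shows "(swap_ij_st) ` overlaps phi k \<subseteq> overlaps phi k"
proof (rule subsetI, elim imageE)
  fix x q assume q: "q \<in> overlaps phi k" and x: "x = (swap_ij_st) q"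
  obtain i j s t where qd: "q = (i,j,s,t)" by (cases q) auto
  from q[unfolded qd] have c: "0 < i" "i < k" "0 < j" "j < k" "0 < s" "s < k" "0 < t" "t < k" "i \<noteq> s"
    "\<not> triv k i j s t" and "\<exists>N. phi ^ N * ((phi ^ j - 1) * (phi ^ s - 1)) = (phi ^ i - 1) * (phi ^ t - 1)"
    unfolding ov_char[OF hk k0] by auto
  then obtain N where E: "phi ^ N * ((phi ^ j - 1) * (phi ^ s - 1)) = (phi ^ i - 1) * (phi ^ t - 1)" by blast
  have ex: "\<exists>N. phi ^ N * ((phi ^ i - 1) * (phi ^ t - 1)) = (phi ^ j - 1) * (phi ^ s - 1)"
  proof (rule exI[of _ "k - N mod k"])
    show "phi ^ (k - N mod k) * ((phi ^ i - 1) * (phi ^ t - 1)) = (phi ^ j - 1) * (phi ^ s - 1)"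
      proof -
        have "phi ^ (k - N mod k) * phi ^ N = phi ^ (k - N mod k) * phi ^ (N mod k)"
          using pow_mod[OF hk, of N] by simp
        also have "\<dots> = phi ^ (k - N mod k + N mod k)" by (simp only: power_add)
        also have "\<dots> = 1" using hk k0 by simp
        finally show ?thesis by (rule alg_ijst[OF E])
      qed
  qed
  have nt: "\<not> triv k j i t s"
  proof
    assume "triv k j i t s"
    then have "triv k i j s t" using c(1-8) unfolding triv_def
      by (auto simp: pm_neg1 pm_neg2 dest: pm_symD)
    with c(10) show False by blast
  qed
  have neq: "j \<noteq> t" using nt unfolding triv_def pm_def by blast
  have "(j, i, t, s) \<in> overlaps phi k"
    unfolding ov_char[OF hk k0] using c(1-8) ex nt neq by (intro conjI) auto
  then show "x \<in> overlaps phi k" by (simp add: x qd swap_ij_st_def)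
qed

lemma pres_k1:
  fixes phi :: "'a::field"
  assumes hk: "phi ^ k = 1" and k0: "0 < k"
    and hm: "phi ^ m = -1"
  shows "(kappa1 k) ` overlaps phi k \<subseteq> overlaps phi k"
proof (rule subsetI, elim imageE)
  fix x q assume q: "q \<in> overlaps phi k" and x: "x = (kappa1 k) q"
  obtain i j s t where qd: "q = (i,j,s,t)" by (cases q) auto
  from q[unfolded qd] have c: "0 < i" "i < k" "0 < j" "j < k" "0 < s" "s < k" "0 < t" "t < k" "i \<noteq> s"
    "\<not> triv k i j s t" and "\<exists>N. phi ^ N * ((phi ^ j - 1) * (phi ^ s - 1)) = (phi ^ i - 1) * (phi ^ t - 1)"
    unfolding ov_char[OF hk k0] by auto
  then obtain N where E: "phi ^ N * ((phi ^ j - 1) * (phi ^ s - 1)) = (phi ^ i - 1) * (phi ^ t - 1)" by blast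
  have ex: "\<exists>N. phi ^ N * ((phi ^ j - 1) * (phi ^ s - 1)) = (phi ^ (k - i) - 1) * (phi ^ t - 1)"
  proof (rule exI[of _ "m + (k - i) + N"])
    show "phi ^ (m + (k - i) + N) * ((phi ^ j - 1) * (phi ^ s - 1)) = (phi ^ (k - i) - 1) * (phi ^ t - 1)"
      unfolding power_add neg_pow[OF hk less_imp_le[OF c(2)]] by (rule alg_k1[OF E hm])
  qed
  have nt: "\<not> triv k (k - i) j s t"
  proof
    assume "triv k (k - i) j s t"
    then have "triv k i j s t" using c(1-8) unfolding triv_def
      by (auto simp: pm_neg1 pm_neg2 dest: pm_symD)
    with c(10) show False by blast
  qed
  have neq: "k - i \<noteq> s" using nt unfolding triv_def pm_def by blast
  have "(k - i, j, s, t) \<in> overlaps phi k"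
    unfolding ov_char[OF hk k0] using c(1-8) ex nt neq by (intro conjI) auto
  then show "x \<in> overlaps phi k" by (simp add: x qd kappa1_def)
qed

lemma pres_k4:
  fixes phi :: "'a::field"
  assumes hk: "phi ^ k = 1" and k0: "0 < k"
    and hm: "phi ^ m = -1"
  shows "(kappa4 k) ` overlaps phi k \<subseteq> overlaps phi k"
proof (rule subsetI, elim imageE)
  fix x q assume q: "q \<in> overlaps phi k" and x: "x = (kappa4 k) q"
  obtain i j s t where qd: "q = (i,j,s,t)" by (cases q) auto
  from q[unfolded qd] have c: "0 < i" "i < k" "0 < j" "j < k" "0 < s" "s < k" "0 < t" "t < k" "i \<noteq> s"
    "\<not> triv k i j s t" and "\<exists>N. phi ^ N * ((phi ^ j - 1) * (phi ^ s - 1)) = (phi ^ i - 1) * (phi ^ t - 1)"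
    unfolding ov_char[OF hk k0] by auto
  then obtain N where E: "phi ^ N * ((phi ^ j - 1) * (phi ^ s - 1)) = (phi ^ i - 1) * (phi ^ t - 1)" by blast
  have ex: "\<exists>N. phi ^ N * ((phi ^ j - 1) * (phi ^ s - 1)) = (phi ^ i - 1) * (phi ^ (k - t) - 1)"
  proof (rule exI[of _ "m + (k - t) + N"])
    show "phi ^ (m + (k - t) + N) * ((phi ^ j - 1) * (phi ^ s - 1)) = (phi ^ i - 1) * (phi ^ (k - t) - 1)"
      unfolding power_add neg_pow[OF hk less_imp_le[OF c(8)]] by (rule alg_k4[OF E hm])
  qed
  have nt: "\<not> triv k i j s (k - t)"
  proof
    assume "triv k i j s (k - t)"
    then have "triv k i j s t" using c(1-8) unfolding triv_def
      by (auto simp: pm_neg1 pm_neg2 dest: pm_symD)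
    with c(10) show False by blast
  qed
  have neq: "i \<noteq> s" using nt unfolding triv_def pm_def by blast
  have "(i, j, s, k - t) \<in> overlaps phi k"
    unfolding ov_char[OF hk k0] using c(1-8) ex nt neq by (intro conjI) auto
  then show "x \<in> overlaps phi k" by (simp add: x qd kappa4_def)
qed

lemma pres_k2:
  fixes phi :: "'a::field"
  assumes hk: "phi ^ k = 1" and k0: "0 < k"
    and hm: "phi ^ m = -1"
  shows "(kappa2 k) ` overlaps phi k \<subseteq> overlaps phi k"
proof (rule subsetI, elim imageE)
  fix x q assume q: "q \<in> overlaps phi k" and x: "x = (kappa2 k) q"
  obtain i j s t where qd: "q = (i,j,s,t)" by (cases q) auto
  from q[unfolded qd] have c: "0 < i" "i < k" "0 < j" "j < k" "0 < s" "s < k" "0 < t" "t < k" "i \<noteq> s"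
    "\<not> triv k i j s t" and "\<exists>N. phi ^ N * ((phi ^ j - 1) * (phi ^ s - 1)) = (phi ^ i - 1) * (phi ^ t - 1)"
    unfolding ov_char[OF hk k0] by auto
  then obtain N where E: "phi ^ N * ((phi ^ j - 1) * (phi ^ s - 1)) = (phi ^ i - 1) * (phi ^ t - 1)" by blast
  have ex: "\<exists>N. phi ^ N * ((phi ^ (k - j) - 1) * (phi ^ s - 1)) = (phi ^ i - 1) * (phi ^ t - 1)"
  proof (rule exI[of _ "m + j + N"])
    show "phi ^ (m + j + N) * ((phi ^ (k - j) - 1) * (phi ^ s - 1)) = (phi ^ i - 1) * (phi ^ t - 1)"
      unfolding power_add neg_pow[OF hk less_imp_le[OF c(4)]] by (rule alg_k2[OF E hm inv_pow[OF hk less_imp_le[OF c(4)]]])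
  qed
  have nt: "\<not> triv k i (k - j) s t"
  proof
    assume "triv k i (k - j) s t"
    then have "triv k i j s t" using c(1-8) unfolding triv_def
      by (auto simp: pm_neg1 pm_neg2 dest: pm_symD)
    with c(10) show False by blast
  qed
  have neq: "i \<noteq> s" using nt unfolding triv_def pm_def by blast
  have "(i, k - j, s, t) \<in> overlaps phi k"
    unfolding ov_char[OF hk k0] using c(1-8) ex nt neq by (intro conjI) auto
  then show "x \<in> overlaps phi k" by (simp add: x qd kappa2_def)
qed

lemma pres_k3:
  fixes phi :: "'a::field"
  assumes hk: "phi ^ k = 1" and k0: "0 < k"
    and hm: "phi ^ m = -1"
  shows "(kappa3 k) ` overlaps phi k \<subseteq> overlaps phi k"
proof (rule subsetI, elim imageE)
  fix x q assume q: "q \<in> overlaps phi k" and x: "x = (kappa3 k) q"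
  obtain i j s t where qd: "q = (i,j,s,t)" by (cases q) auto
  from q[unfolded qd] have c: "0 < i" "i < k" "0 < j" "j < k" "0 < s" "s < k" "0 < t" "t < k" "i \<noteq> s"
    "\<not> triv k i j s t" and "\<exists>N. phi ^ N * ((phi ^ j - 1) * (phi ^ s - 1)) = (phi ^ i - 1) * (phi ^ t - 1)"
    unfolding ov_char[OF hk k0] by auto
  then obtain N where E: "phi ^ N * ((phi ^ j - 1) * (phi ^ s - 1)) = (phi ^ i - 1) * (phi ^ t - 1)" by blast
  have ex: "\<exists>N. phi ^ N * ((phi ^ j - 1) * (phi ^ (k - s) - 1)) = (phi ^ i - 1) * (phi ^ t - 1)"
  proof (rule exI[of _ "m + s + N"])
    show "phi ^ (m + s + N) * ((phi ^ j - 1) * (phi ^ (k - s) - 1)) = (phi ^ i - 1) * (phi ^ t - 1)"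
      unfolding power_add neg_pow[OF hk less_imp_le[OF c(6)]] by (rule alg_k3[OF E hm inv_pow[OF hk less_imp_le[OF c(6)]]])
  qed
  have nt: "\<not> triv k i j (k - s) t"
  proof
    assume "triv k i j (k - s) t"
    then have "triv k i j s t" using c(1-8) unfolding triv_def
      by (auto simp: pm_neg1 pm_neg2 dest: pm_symD)
    with c(10) show False by blast
  qed
  have neq: "i \<noteq> k - s" using nt unfolding triv_def pm_def by blast
  have "(i, j, k - s, t) \<in> overlaps phi k"
    unfolding ov_char[OF hk k0] using c(1-8) ex nt neq by (intro conjI) auto
  then show "x \<in> overlaps phi k" by (simp add: x qd kappa3_def)
qed


theorem lemma16:
  fixes phi :: "'a::field" and Phi :: "'a set" and k :: nat
  assumes "k \<ge> 3"
    and "Phi = range (\<lambda>n. phi ^ n)"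
    and "0 \<notin> Phi"
    and "card Phi = k"
    and "circular Phi"
  shows "(\<forall>g\<in>G1 k. g ` overlaps phi k \<subseteq> overlaps phi k)
    \<and> (even k \<longrightarrow> (\<forall>g\<in>G0 k. g ` overlaps phi k \<subseteq> overlaps phi k))"
proof
  have hk: "phi ^ k = 1" and hne: "\<And>n. 0 < n \<Longrightarrow> n < k \<Longrightarrow> phi ^ n \<noteq> 1"
    using order_facts[OF assms(2,3,4,1)] by blast+
  have k0: "0 < k" using assms(1) by simp
  show "\<forall>g\<in>G1 k. g ` overlaps phi k \<subseteq> overlaps phi k"
  proof
    fix g assume "g \<in> G1 k"
    then show "g ` overlaps phi k \<subseteq> overlaps phi k"
      unfolding G1_def
    proof (rule gen_pres)
      fix h assume "h \<in> {kappa1 k \<circ> kappa4 k, kappa2 k \<circ> kappa4 k, kappa3 k \<circ> kappa4 k,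
                     swap_it, swap_js, swap_ij_st}"
      then show "h ` overlaps phi k \<subseteq> overlaps phi k"
        using pres_k14[OF hk k0] pres_k24[OF hk k0] pres_k34[OF hk k0]
          pres_it[OF hk k0] pres_js[OF hk k0] pres_ijst[OF hk k0]
        by (elim insertE emptyE) (simp_all only:)
    qed
  qed
  show "even k \<longrightarrow> (\<forall>g\<in>G0 k. g ` overlaps phi k \<subseteq> overlaps phi k)"
  proof (intro impI ballI)
    assume ev: "even k"
    define m where "m = k div 2"
    have km: "k = m + m" using ev m_def by auto
    have "phi ^ m * phi ^ m = 1" using hk km by (simp add: power_add[symmetric])
    then have "(phi ^ m - 1) * (phi ^ m + 1) = 0" by (simp add: algebra_simps)
    moreover have "0 < m" "m < k" using km assms(1) by auto
    then have "phi ^ m \<noteq> 1" using hne by blast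
    ultimately have "phi ^ m + 1 = 0" by simp
    then have hm: "phi ^ m = -1" by (simp add: eq_neg_iff_add_eq_0)
    fix g assume "g \<in> G0 k"
    then show "g ` overlaps phi k \<subseteq> overlaps phi k"
      unfolding G0_def
    proof (rule gen_pres)
      fix h assume "h \<in> {kappa1 k, kappa2 k, kappa3 k, kappa4 k, swap_it, swap_js, swap_ij_st}"
      then show "h ` overlaps phi k \<subseteq> overlaps phi k"
        using pres_k1[OF hk k0 hm] pres_k2[OF hk k0 hm] pres_k3[OF hk k0 hm] pres_k4[OF hk k0 hm]
          pres_it[OF hk k0] pres_js[OF hk k0] pres_ijst[OF hk k0]
        by (elim insertE emptyE) (simp_all only:)
    qed
  qed
qed

end
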